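(* Let $n\geq 3$. There exist $a>1$, $p,q\in\mathbb{R}$, $\hat\theta\in\mathbb{R}$, angles $\theta_{\min}\le\theta_0<\theta_{\max}$, and a curve $\gamma_\infty(\theta)=(r_\infty(\theta)\cos\theta,r_\infty(\theta)\sin\theta)$, $\theta\in[\theta_{\min},\theta_{\max}]$, lying on a level curve of $\mathrm{Im}(e^{-i\hat\theta}z^n)$ (hence a stationary solution, i.e. $\frac{2r_\infty'^2-r_\infty r_\infty''+r_\infty^2}{r_\infty'^2+r_\infty^2}+(n-1)=0$), such that $\gamma_\infty(\theta_0)=(1,q)$ with $\gamma_\infty'(\theta_0)$ vertical (so the class $[\alpha]=p[H]-q[E]$ is semi-stable with respect to $[\omega]=a[H]-[E]$ on the blowup of $\mathbb{P}^n$ at a point, destabilized by the exceptional divisor $E$), $\gamma_\infty(\theta_{\max})=(a,p)$, $1\le r_\infty\cos\theta\le a$ with $r_\infty(\theta_{\min})\cos\theta_{\min}=r_\infty(\theta_{\max})\cos\theta_{\max}=a$, and $$r_\infty'\geq 0,\qquad \frac{r_\infty'}{r_\infty}\le 2\tan\theta\qquad\text{on }[\theta_{\min},\theta_{\max}].$$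
   Context: Here $z=x+iy$ is the complex coordinate on $\mathbb{R}^2$. On the blowup $X$ of $\mathbb{P}^n$ at a point, $H$ denotes the pullback of a hyperplane and $E$ the exceptional divisor; $[\omega]=a[H]-[E]$ with $a>1$ is a K\"ahler class. Semi-stability refers to the condition $\pi>\arg Z(V)>\arg Z(X)$ with $Z(V)=-\int_V e^{-i\omega+\alpha}$ (only the degree-$\dim V$ term integrated) holding only non-strictly, with $E$ the subvariety where strictness fails; for Calabi-symmetric data this corresponds to the level curve of $\mathrm{Im}(e^{-i\hat\theta}z^n)$ through $(1,q)$ having vertical tangent there. *)

theory Defs
  imports "HOL-Analysis.Analysis"
begin

end

theory Submission
  imports Defs
begin
definition psi :: "real \<Rightarrow> real \<Rightarrow> real" where "psi N t = N*t - (N-1)*(pi/4)"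
definition rr :: "real \<Rightarrow> real \<Rightarrow> real" where "rr N t = (sqrt 2/2) powr (1/N - 1) * cos(psi N t) powr (-1/N)"
definition r1 :: "real \<Rightarrow> real \<Rightarrow> real" where "r1 N t = rr N t * tan (psi N t)"
definition r2 :: "real \<Rightarrow> real \<Rightarrow> real" where "r2 N t = rr N t * ((tan (psi N t))\<^sup>2 + N / (cos (psi N t))\<^sup>2)"

lemma rr_pos: "cos (psi N t) > 0 \<Longrightarrow> rr N t > 0"
  by (simp add: rr_def)

lemma rr_deriv: assumes "cos (psi N t) > 0" "N > 0"
  shows "(rr N has_real_derivative r1 N t) (at t)"
proof -
  have pw: "cos (N * t - (N - 1) * pi / 4) powr (-(1/N) - 1) = cos (N * t - (N - 1) * pi / 4) powr (-(1/N)) / cos (N * t - (N - 1) * pi / 4)"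
    using assms by (simp add: powr_diff psi_def)
  have "((\<lambda>t. (sqrt 2/2) powr (1/N - 1) * cos(N*t - (N-1)*(pi/4)) powr (-1/N)) has_real_derivative r1 N t) (at t)"
    using assms unfolding psi_def
    apply (intro derivative_eq_intros DERIV_powr refl)
       apply (auto simp: pw)
    apply (simp add: r1_def rr_def tan_def psi_def field_simps)
    done
  then show ?thesis unfolding rr_def[abs_def] psi_def by simp
qed

lemma r1_deriv: assumes "cos (psi N t) > 0" "N > 0"
  shows "(r1 N has_real_derivative r2 N t) (at t)"
proof -
  have d: "((\<lambda>t. tan (psi N t)) has_real_derivative inverse ((cos (psi N t))\<^sup>2) * N) (at t)"
    using assms unfolding psi_def
    by (intro derivative_eq_intros DERIV_chain2[OF DERIV_tan]) auto
  have "((\<lambda>t. rr N t * tan (psi N t)) has_real_derivative r1 N t * tan (psi N t) + inverse ((cos (psi N t))\<^sup>2) * N * rr N t) (at t)"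
    by (rule DERIV_mult[OF rr_deriv[OF assms] d])
  then have "(r1 N has_real_derivative r1 N t * tan (psi N t) + inverse ((cos (psi N t))\<^sup>2) * N * rr N t) (at t)"
    unfolding r1_def[abs_def] by simp
  moreover have "r1 N t * tan (psi N t) + inverse ((cos (psi N t))\<^sup>2) * N * rr N t = r2 N t"
    by (simp add: r1_def r2_def field_simps power2_eq_square)
  ultimately show ?thesis by simp
qed

definition xx :: "real \<Rightarrow> real \<Rightarrow> real" where "xx N t = rr N t * cos t"

lemma xx_deriv: assumes "cos (psi N t) > 0" "N > 0" "cos t > 0"
  shows "(xx N has_real_derivative rr N t * cos t * (tan (psi N t) - tan t)) (at t)"
proof -
  have "((\<lambda>t. rr N t * cos t) has_real_derivative r1 N t * cos t + (- sin t) * rr N t) (at t)"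
    by (intro DERIV_mult rr_deriv assms DERIV_cos)
  moreover have "r1 N t * cos t + (- sin t) * rr N t = rr N t * cos t * (tan (psi N t) - tan t)"
    using assms by (simp add: r1_def tan_def field_simps)
  ultimately show ?thesis unfolding xx_def[abs_def] by simp
qed

lemma rng: assumes "N \<ge> 3" "pi/4 - pi/(4*N) \<le> t" "t \<le> pi/4 + pi/(12*N)"
  shows "0 \<le> psi N t \<and> psi N t \<le> pi/3 \<and> pi/6 \<le> t \<and> t \<le> pi/3"
proof -
  have p: "pi > 0" by simp
  have "pi/(4*N) \<le> pi/12" "pi/(12*N) \<le> pi/36" using assms(1) p by (auto simp: field_simps)
  moreover have "psi N t = N * (t - pi/4) + pi/4" unfolding psi_def by (simp add: ring_distribs diff_divide_distrib)
  moreover have "N * (t - pi/4) \<ge> - pi/4" "N * (t - pi/4) \<le> pi/12"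
  proof -
    have "t - pi/4 \<ge> - (pi/(4*N))" using assms by simp
    then have "N * (t - pi/4) \<ge> N * (- (pi/(4*N)))" using assms(1) by (intro mult_left_mono) auto
    then show "N * (t - pi/4) \<ge> - pi/4" using assms(1) by simp
    have "t - pi/4 \<le> pi/(12*N)" using assms by simp
    then have "N * (t - pi/4) \<le> N * (pi/(12*N))" using assms(1) by (intro mult_left_mono) auto
    then show "N * (t - pi/4) \<le> pi/12" using assms(1) by simp
  qed
  ultimately show ?thesis using assms p by auto
qed

lemma ode: assumes "cos (psi N t) > 0"
  shows "(2 * (r1 N t)\<^sup>2 - rr N t * r2 N t + (rr N t)\<^sup>2) / ((r1 N t)\<^sup>2 + (rr N t)\<^sup>2) + (N - 1) = 0"
proof -
  define c where "c = cos (psi N t)"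
  define s where "s = sin (psi N t)"
  define T where "T = tan (psi N t)"
  define R where "R = rr N t"
  have R: "R > 0" using rr_pos[OF assms] by (simp add: R_def)
  have c: "c > 0" using assms c_def by simp
  have sc: "s^2 + c^2 = 1" by (simp add: s_def c_def)
  have Tc: "1 / c^2 = T^2 + 1" using sc c by (simp add: T_def tan_def s_def c_def field_simps)
  have "(2 * (r1 N t)\<^sup>2 - rr N t * r2 N t + (rr N t)\<^sup>2) / ((r1 N t)\<^sup>2 + (rr N t)\<^sup>2)
     = (2 * (R * T)\<^sup>2 - R * (R * (T\<^sup>2 + N * (1/c^2))) + R^2) / ((R * T)\<^sup>2 + R\<^sup>2)"
    by (simp add: r1_def r2_def R_def T_def c_def)
  also have "... = (R^2 * (T^2 + 1) * (1 - N)) / (R^2 * (T^2 + 1))"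
    unfolding Tc by (simp add: power_mult_distrib algebra_simps power2_eq_square)
  also have "... = 1 - N"
  proof -
    have "T^2 + 1 > 0" by (smt (verit) zero_le_power2)
    then show ?thesis using R by simp
  qed
  finally show ?thesis by simp
qed

lemma im_eq: fixes n :: nat assumes "cos (psi (real n) t) > 0" "n > 0"
  shows "Im (cis (- ((real n - 1) * pi/4 - pi/2)) * (complex_of_real (rr (real n) t) * cis t) ^ n)
     = ((sqrt 2/2) powr (1/real n - 1)) ^ n"
proof -
  let ?N = "real n"
  let ?K = "(sqrt 2/2) powr (1/real n - 1)"
  have e: "- ((?N - 1) * pi/4 - pi/2) + ?N * t = psi ?N t + pi/2" by (simp add: psi_def algebra_simps)
  have "(complex_of_real (rr ?N t) * cis t) ^ n = complex_of_real (rr ?N t ^ n) * cis (?N * t)"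
    using Complex.DeMoivre[of t n] by (simp add: power_mult_distrib)
  then have "cis (- ((?N - 1) * pi/4 - pi/2)) * (complex_of_real (rr ?N t) * cis t) ^ n
     = complex_of_real (rr ?N t ^ n) * (cis (- ((?N - 1) * pi/4 - pi/2)) * cis (?N * t))"
    by (simp add: ac_simps)
  also have "cis (- ((?N - 1) * pi/4 - pi/2)) * cis (?N * t) = cis (psi ?N t + pi/2)"
    unfolding cis_mult e by (rule refl)
  finally have "cis (- ((?N - 1) * pi/4 - pi/2)) * (complex_of_real (rr ?N t) * cis t) ^ n
     = complex_of_real (rr ?N t ^ n) * cis (psi ?N t + pi/2)" .
  then have "Im (cis (- ((?N - 1) * pi/4 - pi/2)) * (complex_of_real (rr ?N t) * cis t) ^ n)
     = rr ?N t ^ n * cos (psi ?N t)"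
    by (simp add: sin_add)
  also have "rr ?N t ^ n = ?K ^ n * (cos (psi ?N t) powr (-1/?N)) ^ n"
    by (simp add: rr_def power_mult_distrib)
  also have "(cos (psi ?N t) powr (-1/?N)) ^ n = cos (psi ?N t) powr (-1)"
    using assms by (simp add: powr_realpow[symmetric] powr_powr)
  finally show ?thesis using assms by (simp add: powr_minus)
qed

lemma pts: assumes "N \<ge> 3" "pi/4 - pi/(4*N) \<le> t" "t \<le> pi/4 + pi/(12*N)"
  shows "cos (psi N t) > 0 \<and> cos t > 0 \<and> 0 \<le> psi N t \<and> psi N t \<le> pi/3 \<and> pi/6 \<le> t \<and> t \<le> pi/3
     \<and> (xx N has_real_derivative rr N t * cos t * (tan (psi N t) - tan t)) (at t)
     \<and> rr N t > 0 \<and> isCont (xx N) t"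
proof -
  note r = rng[OF assms]
  have c1: "cos (psi N t) > 0" using r pi_gt_zero by (intro cos_gt_zero_pi) linarith+
  have c2: "cos t > 0" using r pi_gt_zero by (intro cos_gt_zero_pi) linarith+
  have d: "(xx N has_real_derivative rr N t * cos t * (tan (psi N t) - tan t)) (at t)"
    using c1 c2 assms(1) by (intro xx_deriv) auto
  show ?thesis using r c1 c2 d rr_pos[OF c1] DERIV_isCont by blast
qed

lemma psi_t: "psi N x - x = (N - 1) * (x - pi/4)"
  by (simp add: psi_def algebra_simps)

lemma dec_strict: assumes "N \<ge> 3" "pi/4 - pi/(4*N) \<le> a" "a < b" "b \<le> pi/4"
  shows "xx N b < xx N a"
proof (rule DERIV_neg_imp_decreasing_open[OF assms(3)])
  have pi: "pi/4 \<le> pi/4 + pi/(12*N)" using assms(1) by simp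
  show "continuous_on {a..b} (xx N)"
    using pts[OF assms(1)] assms pi by (intro continuous_at_imp_continuous_on) auto
  fix x assume x: "a < x" "x < b"
  note p = pts[OF assms(1), of x]
  have P: "cos (psi N x) > 0 \<and> cos x > 0 \<and> 0 \<le> psi N x \<and> psi N x \<le> pi/3 \<and> pi/6 \<le> x \<and> x \<le> pi/3
     \<and> (xx N has_real_derivative rr N x * cos x * (tan (psi N x) - tan x)) (at x)
     \<and> rr N x > 0" using p x assms pi by auto
  have "(N - 1) * (x - pi/4) < 0" using assms x by (intro mult_pos_neg) auto
  then have "psi N x < x" using psi_t[of N x] by linarith
  then have "tan (psi N x) < tan x" using P by (intro tan_monotone) auto
  then have "rr N x * cos x * (tan (psi N x) - tan x) < 0" using P
    by (intro mult_pos_neg) auto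
  then show "\<exists>y. (xx N has_real_derivative y) (at x) \<and> y < 0" using P by blast
qed

lemma inc_strict: assumes "N \<ge> 3" "pi/4 \<le> a" "a < b" "b \<le> pi/4 + pi/(12*N)"
  shows "xx N a < xx N b"
proof (rule DERIV_pos_imp_increasing_open[OF assms(3)])
  have pi: "pi/4 - pi/(4*N) \<le> pi/4" using assms(1) by simp
  show "continuous_on {a..b} (xx N)"
    using pts[OF assms(1)] assms pi by (intro continuous_at_imp_continuous_on) auto
  fix x assume x: "a < x" "x < b"
  note p = pts[OF assms(1), of x]
  have P: "cos (psi N x) > 0 \<and> cos x > 0 \<and> 0 \<le> psi N x \<and> psi N x \<le> pi/3 \<and> pi/6 \<le> x \<and> x \<le> pi/3
     \<and> (xx N has_real_derivative rr N x * cos x * (tan (psi N x) - tan x)) (at x)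
     \<and> rr N x > 0" using p x assms pi by auto
  have "(N - 1) * (x - pi/4) > 0" using assms x by (intro mult_pos_pos) auto
  then have "psi N x > x" using psi_t[of N x] by linarith
  then have "tan (psi N x) > tan x" using P by (intro tan_monotone) auto
  then have "rr N x * cos x * (tan (psi N x) - tan x) > 0" using P
    by (intro mult_pos_pos) auto
  then show "\<exists>y. (xx N has_real_derivative y) (at x) \<and> y > 0" using P by blast
qed

lemma xx_t0: "xx N (pi/4) = 1"
proof -
  have h: "psi N (pi/4) = pi/4" using psi_t[of N "pi/4"] by simp
  define s where "s = sqrt 2 / 2"
  have s: "s > 0" by (simp add: s_def)
  have "xx N (pi/4) = s powr (1/N - 1) * s powr (-1/N) * s"
    unfolding xx_def rr_def h cos_45 s_def by simp
  also have "... = s powr (1/N - 1) * s powr (-1/N) * s powr 1" using s by simp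
  also have "... = s powr (1/N - 1 + -1/N + 1)" by (simp only: powr_add)
  also have "1/N - 1 + -1/N + 1 = (0::real)" by simp
  then have "s powr (1/N - 1 + -1/N + 1) = 1" using s by simp
  finally show ?thesis .
qed

lemma dec: assumes "N \<ge> 3" "pi/4 - pi/(4*N) \<le> a" "a \<le> b" "b \<le> pi/4"
  shows "xx N b \<le> xx N a"
  using dec_strict[OF assms(1,2) _ assms(4)] assms(3) by (cases "a = b") auto

lemma inc: assumes "N \<ge> 3" "pi/4 \<le> a" "a \<le> b" "b \<le> pi/4 + pi/(12*N)"
  shows "xx N a \<le> xx N b"
  using inc_strict[OF assms(1,2) _ assms(4)] assms(3) by (cases "a = b") auto

theorem lemma5p2:
  fixes n :: nat
  assumes "n \<ge> 3"
  shows "\<exists>(a::real) (p::real) (q::real) (th_hat::real) (th_min::real) (th0::real) (th_max::real)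
           (r::real \<Rightarrow> real) (r1::real \<Rightarrow> real) (r2::real \<Rightarrow> real) (c::real).
    a > 1 \<and> th_min \<le> th0 \<and> th0 < th_max \<and>
    (\<forall>t\<in>{th_min..th_max}.
        r t > 0 \<and>
        (r has_real_derivative r1 t) (at t within {th_min..th_max}) \<and>
        (r1 has_real_derivative r2 t) (at t within {th_min..th_max}) \<and>
        Im (cis (- th_hat) * (complex_of_real (r t) * cis t) ^ n) = c \<and>
        (2 * (r1 t)\<^sup>2 - r t * r2 t + (r t)\<^sup>2) / ((r1 t)\<^sup>2 + (r t)\<^sup>2) + (real n - 1) = 0 \<and>
        1 \<le> r t * cos t \<and> r t * cos t \<le> a \<and>
        r1 t \<ge> 0 \<and> r1 t / r t \<le> 2 * tan t) \<and>
    r th0 * cos th0 = 1 \<and> r th0 * sin th0 = q \<and>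
    r1 th0 * cos th0 - r th0 * sin th0 = 0 \<and>
    (r1 th0 * cos th0 - r th0 * sin th0, r1 th0 * sin th0 + r th0 * cos th0) \<noteq> (0, 0) \<and>
    r th_max * cos th_max = a \<and> r th_max * sin th_max = p \<and>
    r th_min * cos th_min = a"
proof -
  define N where "N = real n"
  have N3: "N \<ge> 3" using assms by (simp add: N_def)
  have pi: "pi > 0" by simp
  define tm where "tm = pi/4 - pi/(4*N)"
  define tB where "tB = pi/4 + pi/(12*N)"
  have tm: "tm < pi/4" using N3 by (simp add: tm_def)
  have tB: "pi/4 < tB" using N3 by (simp add: tB_def)
  have x1: "xx N tm > 1" using dec_strict[OF N3 _ tm] xx_t0[of N] by (simp add: tm_def)
  have "isCont (xx N) (pi/4)" using pts[OF N3, of "pi/4"] tm tB by (simp add: tm_def tB_def)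
  then have "(xx N \<longlongrightarrow> 1) (at (pi/4))" using xx_t0[of N] by (simp add: isCont_def)
  then have "eventually (\<lambda>y. xx N y < xx N tm) (at (pi/4))" using x1 by (rule order_tendstoD(2))
  then obtain d where d: "d > 0" "\<And>y. y \<noteq> pi/4 \<Longrightarrow> dist y (pi/4) < d \<Longrightarrow> xx N y < xx N tm"
    unfolding eventually_at by auto
  define thM where "thM = pi/4 + min d (pi/(12*N)) / 2"
  have thM1: "pi/4 < thM" using d N3 by (simp add: thM_def)
  have thM2: "thM \<le> tB"
  proof -
    have "min d (pi/(12*N)) \<le> pi/(12*N)" by simp
    moreover have "pi/(12*N) > 0" using N3 by simp
    ultimately show ?thesis by (simp add: thM_def tB_def)
  qed
  define A where "A = xx N thM"
  have A1: "1 < A" using inc_strict[OF N3 _ thM1] thM2 xx_t0[of N] by (simp add: A_def tB_def)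
  have A2: "A < xx N tm" unfolding A_def using d thM1 by (intro d(2)) (auto simp: thM_def dist_real_def)
  have "\<exists>x. tm \<le> x \<and> x \<le> pi/4 \<and> xx N x = A"
    using A1 A2 tm xx_t0[of N] pts[OF N3] tB
    by (intro IVT2) (auto simp: tm_def tB_def)
  then obtain thn where thn: "tm \<le> thn" "thn \<le> pi/4" "xx N thn = A" by auto
  define K where "K = (sqrt 2/2) powr (1/real n - 1)"
  have main: "\<forall>t\<in>{thn..thM}.
        rr N t > 0 \<and>
        (rr N has_real_derivative r1 N t) (at t within {thn..thM}) \<and>
        (r1 N has_real_derivative r2 N t) (at t within {thn..thM}) \<and>
        Im (cis (- ((real n - 1) * pi/4 - pi/2)) * (complex_of_real (rr N t) * cis t) ^ n) = K ^ n \<and>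
        (2 * (r1 N t)\<^sup>2 - rr N t * r2 N t + (rr N t)\<^sup>2) / ((r1 N t)\<^sup>2 + (rr N t)\<^sup>2) + (real n - 1) = 0 \<and>
        1 \<le> rr N t * cos t \<and> rr N t * cos t \<le> A \<and>
        r1 N t \<ge> 0 \<and> r1 N t / rr N t \<le> 2 * tan t"
  proof
    fix t assume t: "t \<in> {thn..thM}"
    have t1: "tm \<le> t" "t \<le> tB" using t thn thM2 by auto
    note P = pts[OF N3 t1[unfolded tm_def tB_def]]
    have N0: "N > 0" using N3 by simp
    have D1: "(rr N has_real_derivative r1 N t) (at t within {thn..thM})"
      using rr_deriv[OF _ N0, of t] P by (auto intro: has_field_derivative_at_within)
    have D2: "(r1 N has_real_derivative r2 N t) (at t within {thn..thM})"
      using r1_deriv[OF _ N0, of t] P by (auto intro: has_field_derivative_at_within)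
    have I: "Im (cis (- ((real n - 1) * pi/4 - pi/2)) * (complex_of_real (rr N t) * cis t) ^ n) = K ^ n"
      using im_eq[of n t] P assms by (simp add: N_def K_def)
    have O: "(2 * (r1 N t)\<^sup>2 - rr N t * r2 N t + (rr N t)\<^sup>2) / ((r1 N t)\<^sup>2 + (rr N t)\<^sup>2) + (real n - 1) = 0"
      using ode[of N t] P by (simp add: N_def)
    have B: "1 \<le> xx N t \<and> xx N t \<le> A"
    proof (cases "t \<le> pi/4")
      case True
      then show ?thesis using dec[OF N3, of t "pi/4"] dec[OF N3, of thn t] xx_t0[of N] t1 thn t
        by (auto simp: tm_def)
    next
      case False
      then show ?thesis using inc[OF N3, of "pi/4" t] inc[OF N3, of t thM] xx_t0[of N] t1 thM2 t
        by (auto simp: tB_def A_def)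
    qed
    have tp: "0 \<le> tan (psi N t)" using tan_mono_le[of 0 "psi N t"] P pi by auto
    have R1: "r1 N t \<ge> 0" using tp P by (simp add: r1_def)
    have tt: "0 \<le> tan t" using tan_mono_le[of 0 t] P pi by auto
    have R2: "r1 N t / rr N t \<le> 2 * tan t"
    proof -
      have e: "r1 N t / rr N t = tan (psi N t)" using P by (simp add: r1_def)
      show ?thesis
      proof (cases "t \<le> pi/4")
        case True
        have "(N - 1) * (t - pi/4) \<le> 0" using N3 True by (intro mult_nonneg_nonpos) auto
        then have "psi N t \<le> t" using psi_t[of N t] by linarith
        then have "tan (psi N t) \<le> tan t" using P pi_gt_zero by (intro tan_mono_le) linarith+
        then show ?thesis using e tt by simp
      next
        case False
        have "tan (psi N t) \<le> tan (pi/3)" using P pi_gt_zero by (intro tan_mono_le) linarith+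
        moreover have "tan (pi/4) \<le> tan t" using P pi_gt_zero False by (intro tan_mono_le) linarith+
        moreover have "sqrt 3 \<le> (2::real)" by (rule real_le_lsqrt) auto
        ultimately show ?thesis using e by (simp add: tan_60 tan_45)
      qed
    qed
    show "rr N t > 0 \<and>
        (rr N has_real_derivative r1 N t) (at t within {thn..thM}) \<and>
        (r1 N has_real_derivative r2 N t) (at t within {thn..thM}) \<and>
        Im (cis (- ((real n - 1) * pi/4 - pi/2)) * (complex_of_real (rr N t) * cis t) ^ n) = K ^ n \<and>
        (2 * (r1 N t)\<^sup>2 - rr N t * r2 N t + (rr N t)\<^sup>2) / ((r1 N t)\<^sup>2 + (rr N t)\<^sup>2) + (real n - 1) = 0 \<and>
        1 \<le> rr N t * cos t \<and> rr N t * cos t \<le> A \<and>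
        r1 N t \<ge> 0 \<and> r1 N t / rr N t \<le> 2 * tan t"
      using P D1 D2 I O B R1 R2 by (simp add: xx_def)
  qed
  have h: "psi N (pi/4) = pi/4" using psi_t[of N "pi/4"] by simp
  have P0: "rr N (pi/4) > 0" using pts[OF N3, of "pi/4"] tm tB by (simp add: tm_def tB_def)
  have T0: "r1 N (pi/4) * cos (pi/4) - rr N (pi/4) * sin (pi/4) = 0"
    by (simp add: r1_def h tan_45 cos_45 sin_45)
  have T1: "(r1 N (pi/4) * cos (pi/4) - rr N (pi/4) * sin (pi/4), r1 N (pi/4) * sin (pi/4) + rr N (pi/4) * cos (pi/4)) \<noteq> (0, 0)"
    using P0 by (simp add: r1_def h tan_45 cos_45 sin_45)
  show ?thesis
    apply (rule exI[of _ A], rule exI[of _ "rr N thM * sin thM"], rule exI[of _ "rr N (pi/4) * sin (pi/4)"],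
       rule exI[of _ "(real n - 1) * pi/4 - pi/2"], rule exI[of _ thn], rule exI[of _ "pi/4"], rule exI[of _ thM],
       rule exI[of _ "rr N"], rule exI[of _ "r1 N"], rule exI[of _ "r2 N"], rule exI[of _ "K ^ n"])
    using A1 thn thM1 main T0 T1 xx_t0[of N]
    by (simp add: xx_def A_def)
qed
end
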